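(* Let $\alpha\in(0,1/2)$ and suppose $V_0(x)+V_1(x)>0$ for all $x\in\mathcal X$. Then the allocation policy minimizing $\mathrm{tr}(\Sigma_{\mathrm{eff}}(\pi))$ over $\pi\in\Pi_\alpha=\{\pi:\alpha\le\pi(x)\le1-\alpha\ \text{for all }x\}$ is $$\pi^\star(x)=\mathrm{clip}_\alpha\!\left(\frac{\sqrt{V_1(x)}}{\sqrt{V_1(x)}+\sqrt{V_0(x)}}\right),\qquad V_a(x)=\sum_{t=0}^{t_{\max}}v_{t,a}(x)=\mathrm{tr}(\Sigma_a(x)),$$ where $v_{t,a}(x)$ is the $t$-th diagonal entry of $\Sigma_a(x)$.
   Context: Discrete horizon $\mathcal T=\{0,\dots,t_{\max}\}$; unit $(X,A,T,C)$ with covariates $X$, treatment $A\in\{0,1\}$, event time $T$, censoring time $C$; observed $\mathcal O=(X,A,\widetilde T,\Delta)$, $\widetilde T=\min\{T,C\}$, $\Delta=\mathbf 1(T\le C)$. $S_t(x,a)=\mathbb P(T>t\mid X=x,A=a)$, $\lambda^S_t(x,a)=\mathbb P(\widetilde T=t,\Delta=1\mid\widetilde T\ge t,X=x,A=a)$, $\lambda^G_t(x,a)=\mathbb P(\widetilde T=t,\Delta=0\mid\widetilde T\ge t,X=x,A=a)$, $G_{t-1}(x,a)=\prod_{i=0}^{t-1}(1-\lambda^G_i(x,a)/(1-\lambda^S_i(x,a)))$, $S_{-1}=G_{-1}\equiv 1$. $\eta_t$ denotes the collection of these hazards up to time $t$, and $\xi(\mathcal O,\eta_t)=\sum_{i=0}^t\frac{\mathbf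 1(\widetilde T=i,\Delta=1)-\mathbf 1(\widetilde T\ge i)\lambda^S_i(X,A)}{S_i(X,A)G_{i-1}(X,A)}$. $\tau_t=\mathbb E[S_t(X,1)-S_t(X,0)]$, $\boldsymbol\tau=(\tau_t)_{t=0}^{t_{\max}}$, $\boldsymbol S(X,a)=(S_t(X,a))_{t=0}^{t_{\max}}$, $\boldsymbol\xi=(\xi(\mathcal O,\eta_t))_{t=0}^{t_{\max}}$. For a policy $\pi(x)=\mathbb P(A=1\mid X=x)$, $\Sigma_a(X)=\mathrm{Var}(\boldsymbol S(X,a)\odot\boldsymbol\xi\mid X,A=a)$ ($\odot$ entrywise product) and $\Sigma_{\mathrm{eff}}(\pi)=\mathbb E[\Sigma_1(X)/\pi(X)+\Sigma_0(X)/(1-\pi(X))]+\mathbb E[b(X)b(X)^\top]$ with $b(X)=\boldsymbol S(X,1)-\boldsymbol S(X,0)-\boldsymbol\tau$. $\mathrm{clip}_\alpha(u)=\min\{1-\alpha,\max\{\alpha,u\}\}$. *)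

theory Defs
  imports "HOL-Probability.Probability"
begin

text \<open>For covariate value x and treatment a (0 or 1),
  L x a is the conditional joint law of the latent pair (T, C) given X = x, A = a.\<close>

type_synonym 'x latent_law = "'x \<Rightarrow> nat \<Rightarrow> (nat \<times> nat) pmf"

definition Ttil :: "nat \<times> nat \<Rightarrow> nat" where
  "Ttil tc = min (fst tc) (snd tc)"

definition Dlt :: "nat \<times> nat \<Rightarrow> bool" where
  "Dlt tc = (fst tc \<le> snd tc)"

definition surv :: "'x latent_law \<Rightarrow> nat \<Rightarrow> 'x \<Rightarrow> nat \<Rightarrow> real" where
  "surv L t x a = measure_pmf.prob (L x a) {tc. t < fst tc}"

text \<open>lambda^S_i(x,a) and lambda^G_i(x,a) (conditional probabilities; x / 0 = 0 convention).\<close>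
definition hazS :: "'x latent_law \<Rightarrow> nat \<Rightarrow> 'x \<Rightarrow> nat \<Rightarrow> real" where
  "hazS L i x a = measure_pmf.prob (L x a) {tc. Ttil tc = i \<and> Dlt tc}
                  / measure_pmf.prob (L x a) {tc. i \<le> Ttil tc}"

definition hazG :: "'x latent_law \<Rightarrow> nat \<Rightarrow> 'x \<Rightarrow> nat \<Rightarrow> real" where
  "hazG L i x a = measure_pmf.prob (L x a) {tc. Ttil tc = i \<and> \<not> Dlt tc}
                  / measure_pmf.prob (L x a) {tc. i \<le> Ttil tc}"

text \<open>censprev L t x a = G_{t-1}(x,a) = prod_{i=0}^{t-1} (1 - lambda^G_i / (1 - lambda^S_i));
  in particular censprev L 0 x a = G_{-1} = 1.\<close>
definition censprev :: "'x latent_law \<Rightarrow> nat \<Rightarrow> 'x \<Rightarrow> nat \<Rightarrow> real" where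
  "censprev L t x a = (\<Prod>i<t. 1 - hazG L i x a / (1 - hazS L i x a))"

text \<open>xi(O, eta_t) evaluated at X = x, A = a, as a function of the latent pair (T, C).\<close>
definition xi :: "'x latent_law \<Rightarrow> nat \<Rightarrow> 'x \<Rightarrow> nat \<Rightarrow> nat \<times> nat \<Rightarrow> real" where
  "xi L t x a tc = (\<Sum>i\<le>t.
      ((if Ttil tc = i \<and> Dlt tc then 1 else 0) - (if i \<le> Ttil tc then 1 else 0) * hazS L i x a)
      / (surv L i x a * censprev L i x a))"

definition Zvec :: "'x latent_law \<Rightarrow> nat \<Rightarrow> 'x \<Rightarrow> nat \<Rightarrow> nat \<times> nat \<Rightarrow> real" where
  "Zvec L t x a tc = surv L t x a * xi L t x a tc"

definition Sigma_a :: "'x latent_law \<Rightarrow> nat \<Rightarrow> 'x \<Rightarrow> nat \<Rightarrow> nat \<Rightarrow> real" where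
  "Sigma_a L a x t s = measure_pmf.expectation (L x a)
     (\<lambda>tc. (Zvec L t x a tc - measure_pmf.expectation (L x a) (Zvec L t x a))
          * (Zvec L s x a tc - measure_pmf.expectation (L x a) (Zvec L s x a)))"

definition vdiag :: "'x latent_law \<Rightarrow> nat \<Rightarrow> nat \<Rightarrow> 'x \<Rightarrow> real" where
  "vdiag L t a x = Sigma_a L a x t t"

definition Vtr :: "nat \<Rightarrow> 'x latent_law \<Rightarrow> nat \<Rightarrow> 'x \<Rightarrow> real" where
  "Vtr tmax L a x = (\<Sum>t\<le>tmax. vdiag L t a x)"

definition tau :: "'x measure \<Rightarrow> 'x latent_law \<Rightarrow> nat \<Rightarrow> real" where
  "tau PX L t = (\<integral>x. surv L t x 1 - surv L t x 0 \<partial>PX)"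

definition bvec :: "'x measure \<Rightarrow> 'x latent_law \<Rightarrow> nat \<Rightarrow> 'x \<Rightarrow> real" where
  "bvec PX L t x = surv L t x 1 - surv L t x 0 - tau PX L t"

definition Sigma_eff :: "'x measure \<Rightarrow> 'x latent_law \<Rightarrow> ('x \<Rightarrow> real) \<Rightarrow> nat \<Rightarrow> nat \<Rightarrow> real" where
  "Sigma_eff PX L \<pi> t s =
     (\<integral>x. Sigma_a L 1 x t s / \<pi> x + Sigma_a L 0 x t s / (1 - \<pi> x) \<partial>PX)
     + (\<integral>x. bvec PX L t x * bvec PX L s x \<partial>PX)"

definition trace_Sigma_eff :: "nat \<Rightarrow> 'x measure \<Rightarrow> 'x latent_law \<Rightarrow> ('x \<Rightarrow> real) \<Rightarrow> real" where
  "trace_Sigma_eff tmax PX L \<pi> = (\<Sum>t\<le>tmax. Sigma_eff PX L \<pi> t t)"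

definition clip :: "real \<Rightarrow> real \<Rightarrow> real" where
  "clip \<alpha> u = min (1 - \<alpha>) (max \<alpha> u)"

definition Pi_alpha :: "'x measure \<Rightarrow> real \<Rightarrow> ('x \<Rightarrow> real) set" where
  "Pi_alpha PX \<alpha> = {\<pi>. \<pi> \<in> borel_measurable PX \<and> (\<forall>x\<in>space PX. \<alpha> \<le> \<pi> x \<and> \<pi> x \<le> 1 - \<alpha>)}"

end

theory Submission
  imports Defs
begin

lemma mono_up:
  fixes a b p q :: real
  assumes "0 \<le> a" "0 \<le> b" "0 < q" "q \<le> p" "p < 1" "a * (1 - q) \<le> b * q"
  shows "a^2 / q + b^2 / (1 - q) \<le> a^2 / p + b^2 / (1 - p)"
proof -
  have p0: "0 < p" using assms by linarith
  have h1: "a * (1 - p) \<le> b * p"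
  proof -
    have "a * (1 - p) \<le> a * (1 - q)" using assms by (intro mult_left_mono) auto
    also have "\<dots> \<le> b * q" by fact
    also have "\<dots> \<le> b * p" using assms by (intro mult_left_mono) auto
    finally show ?thesis .
  qed
  have "(a * (1 - p)) * (a * (1 - q)) \<le> (b * p) * (b * q)"
  proof (rule mult_mono[OF h1 assms(6)])
    show "0 \<le> b * p" using assms by simp
    show "0 \<le> a * (1 - q)" using assms by simp
  qed
  hence h2: "a^2 * (1 - p) * (1 - q) \<le> b^2 * p * q" by (simp add: power2_eq_square algebra_simps)
  have eq: "(a^2 / p + b^2 / (1 - p)) - (a^2 / q + b^2 / (1 - q))
     = (p - q) * (b^2 * p * q - a^2 * (1 - p) * (1 - q)) / (p * q * (1 - p) * (1 - q))"
    using assms p0 by (simp add: field_simps)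
  have "0 \<le> (p - q) * (b^2 * p * q - a^2 * (1 - p) * (1 - q)) / (p * q * (1 - p) * (1 - q))"
    using assms p0 h2 by (intro divide_nonneg_pos mult_nonneg_nonneg mult_pos_pos) auto
  thus ?thesis using eq by linarith
qed

lemma mono_down:
  fixes a b p q :: real
  assumes "0 \<le> a" "0 \<le> b" "0 < p" "p \<le> q" "q < 1" "b * q \<le> a * (1 - q)"
  shows "a^2 / q + b^2 / (1 - q) \<le> a^2 / p + b^2 / (1 - p)"
proof -
  have "b^2 / (1 - q) + a^2 / (1 - (1 - q)) \<le> b^2 / (1 - p) + a^2 / (1 - (1 - p))"
    using assms by (intro mono_up) auto
  thus ?thesis by simp
qed

lemma key:
  fixes a b p \<alpha> :: real
  assumes "0 \<le> a" "0 \<le> b" "0 < a + b" "0 < \<alpha>" "\<alpha> < 1/2" "\<alpha> \<le> p" "p \<le> 1 - \<alpha>"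
  shows "a^2 / clip \<alpha> (a/(a+b)) + b^2 / (1 - clip \<alpha> (a/(a+b))) \<le> a^2 / p + b^2 / (1 - p)"
proof -
  define q where "q = clip \<alpha> (a/(a+b))"
  define r where "r = a/(a+b)"
  have q: "q = min (1 - \<alpha>) (max \<alpha> r)" unfolding q_def r_def clip_def by simp
  have qb: "\<alpha> \<le> q" "q \<le> 1 - \<alpha>" using q assms by auto
  have up: "a * (1 - q) \<le> b * q" if "r \<le> q"
  proof -
    have "a \<le> q * (a + b)" using that assms unfolding r_def by (simp add: divide_le_eq mult.commute)
    thus ?thesis by (simp add: algebra_simps)
  qed
  have dn: "b * q \<le> a * (1 - q)" if "q \<le> r"
  proof -
    have "q * (a + b) \<le> a" using that assms unfolding r_def by (simp add: le_divide_eq mult.commute)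
    thus ?thesis by (simp add: algebra_simps)
  qed
  have "a^2 / q + b^2 / (1 - q) \<le> a^2 / p + b^2 / (1 - p)"
  proof (cases "p = q")
    case True thus ?thesis by simp
  next
    case False
    show ?thesis
    proof (cases "q < p")
      case True
      hence "q < 1 - \<alpha>" using assms by linarith
      hence "r \<le> q" using q by (auto simp: min_def max_def split: if_splits)
      thus ?thesis using True assms qb by (intro mono_up up) auto
    next
      case False2: False
      hence "p < q" using False by linarith
      hence "\<alpha> < q" using assms by linarith
      hence "q \<le> r" using q by (auto simp: min_def max_def split: if_splits)
      thus ?thesis using \<open>p < q\<close> assms qb by (intro mono_down dn) auto
    qed
  qed
  thus ?thesis unfolding q_def .
qed

lemma vdiag_nonneg: "0 \<le> vdiag L t a x"
  unfolding vdiag_def Sigma_a_def by (rule integral_nonneg_AE) auto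

lemma Vtr_nonneg: "0 \<le> Vtr tmax L a x"
  unfolding Vtr_def by (intro sum_nonneg) (simp add: vdiag_nonneg)

theorem proposition1:
  fixes PX :: "'x measure" and L :: "'x latent_law" and tmax :: nat and \<alpha> :: real
  assumes "prob_space PX"
    and "0 < \<alpha>" and "\<alpha> < 1/2"
    and "\<forall>x\<in>space PX. Vtr tmax L 0 x + Vtr tmax L 1 x > 0"
    and "\<forall>a\<in>{0,1}. \<forall>t\<le>tmax. integrable PX (\<lambda>x. vdiag L t a x)"
    and "\<forall>a\<in>{0,1}. \<forall>t\<le>tmax. (\<lambda>x. surv L t x a) \<in> borel_measurable PX"
  shows "(\<lambda>x. clip \<alpha> (sqrt (Vtr tmax L 1 x) / (sqrt (Vtr tmax L 1 x) + sqrt (Vtr tmax L 0 x))))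
           \<in> Pi_alpha PX \<alpha>
       \<and> (\<forall>\<pi>\<in>Pi_alpha PX \<alpha>.
            trace_Sigma_eff tmax PX L
              (\<lambda>x. clip \<alpha> (sqrt (Vtr tmax L 1 x) / (sqrt (Vtr tmax L 1 x) + sqrt (Vtr tmax L 0 x))))
            \<le> trace_Sigma_eff tmax PX L \<pi>)"
proof -
  define ps where "ps = (\<lambda>x. clip \<alpha> (sqrt (Vtr tmax L 1 x) / (sqrt (Vtr tmax L 1 x) + sqrt (Vtr tmax L 0 x))))"
  have intv: "integrable PX (\<lambda>x. vdiag L t a x)" if "a \<in> {0,1}" "t \<le> tmax" for a t
    using assms(5) that by blast
  have mV: "(\<lambda>x. Vtr tmax L a x) \<in> borel_measurable PX" if "a \<in> {0,1}" for a
    unfolding Vtr_def using intv[OF that] by (intro borel_measurable_sum) auto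
  have psm: "ps \<in> borel_measurable PX"
    unfolding ps_def clip_def using mV[of 0] mV[of 1] by measurable
  have psb: "\<alpha> \<le> ps x \<and> ps x \<le> 1 - \<alpha>" for x
    unfolding ps_def clip_def using assms(3) by auto
  have ps_in: "ps \<in> Pi_alpha PX \<alpha>" unfolding Pi_alpha_def using psm psb by auto
  have tr: "trace_Sigma_eff tmax PX L \<pi> =
      (\<integral>x. Vtr tmax L 1 x / \<pi> x + Vtr tmax L 0 x / (1 - \<pi> x) \<partial>PX)
      + (\<Sum>t\<le>tmax. \<integral>x. bvec PX L t x * bvec PX L t x \<partial>PX)"
    and intp: "integrable PX (\<lambda>x. Vtr tmax L 1 x / \<pi> x + Vtr tmax L 0 x / (1 - \<pi> x))"
    if "\<pi> \<in> Pi_alpha PX \<alpha>" for \<pi>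
  proof -
    have pm: "\<pi> \<in> borel_measurable PX" and pb: "\<And>x. x \<in> space PX \<Longrightarrow> \<alpha> \<le> \<pi> x \<and> \<pi> x \<le> 1 - \<alpha>"
      using that unfolding Pi_alpha_def by auto
    have i1: "integrable PX (\<lambda>x. vdiag L t 1 x / \<pi> x)" if "t \<le> tmax" for t
    proof (rule Bochner_Integration.integrable_bound[where f="\<lambda>x. vdiag L t 1 x / \<alpha>"])
      show "integrable PX (\<lambda>x. vdiag L t 1 x / \<alpha>)" using intv[of 1 t] that by auto
      show "(\<lambda>x. vdiag L t 1 x / \<pi> x) \<in> borel_measurable PX"
        using intv[of 1 t] that pm by measurable
      show "AE x in PX. norm (vdiag L t 1 x / \<pi> x) \<le> norm (vdiag L t 1 x / \<alpha>)"
      proof (rule AE_I2)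
        fix x assume x: "x \<in> space PX"
        have "vdiag L t 1 x / \<pi> x \<le> vdiag L t 1 x / \<alpha>"
          using pb[OF x] assms(2) vdiag_nonneg[of L t 1 x] by (intro divide_left_mono) auto
        thus "norm (vdiag L t 1 x / \<pi> x) \<le> norm (vdiag L t 1 x / \<alpha>)"
          using pb[OF x] assms(2) vdiag_nonneg[of L t 1 x] by auto
      qed
    qed
    have i0: "integrable PX (\<lambda>x. vdiag L t 0 x / (1 - \<pi> x))" if "t \<le> tmax" for t
    proof (rule Bochner_Integration.integrable_bound[where f="\<lambda>x. vdiag L t 0 x / \<alpha>"])
      show "integrable PX (\<lambda>x. vdiag L t 0 x / \<alpha>)" using intv[of 0 t] that by auto
      show "(\<lambda>x. vdiag L t 0 x / (1 - \<pi> x)) \<in> borel_measurable PX"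
        using intv[of 0 t] that pm by measurable
      show "AE x in PX. norm (vdiag L t 0 x / (1 - \<pi> x)) \<le> norm (vdiag L t 0 x / \<alpha>)"
      proof (rule AE_I2)
        fix x assume x: "x \<in> space PX"
        have "vdiag L t 0 x / (1 - \<pi> x) \<le> vdiag L t 0 x / \<alpha>"
          using pb[OF x] assms(2) vdiag_nonneg[of L t 0 x] by (intro divide_left_mono) auto
        thus "norm (vdiag L t 0 x / (1 - \<pi> x)) \<le> norm (vdiag L t 0 x / \<alpha>)"
          using pb[OF x] assms(2) vdiag_nonneg[of L t 0 x] by auto
      qed
    qed
    have isum: "integrable PX (\<lambda>x. vdiag L t 1 x / \<pi> x + vdiag L t 0 x / (1 - \<pi> x))"
      if "t \<le> tmax" for t using i1[OF that] i0[OF that] by auto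
    have eqf: "(\<lambda>x. Vtr tmax L 1 x / \<pi> x + Vtr tmax L 0 x / (1 - \<pi> x))
       = (\<lambda>x. \<Sum>t\<le>tmax. vdiag L t 1 x / \<pi> x + vdiag L t 0 x / (1 - \<pi> x))"
      unfolding Vtr_def by (simp add: sum_divide_distrib sum.distrib)
    show "integrable PX (\<lambda>x. Vtr tmax L 1 x / \<pi> x + Vtr tmax L 0 x / (1 - \<pi> x))"
      unfolding eqf using isum by auto
    have "(\<integral>x. Vtr tmax L 1 x / \<pi> x + Vtr tmax L 0 x / (1 - \<pi> x) \<partial>PX)
       = (\<Sum>t\<le>tmax. \<integral>x. vdiag L t 1 x / \<pi> x + vdiag L t 0 x / (1 - \<pi> x) \<partial>PX)"
      unfolding eqf by (rule Bochner_Integration.integral_sum) (use isum in auto)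
    thus "trace_Sigma_eff tmax PX L \<pi> =
      (\<integral>x. Vtr tmax L 1 x / \<pi> x + Vtr tmax L 0 x / (1 - \<pi> x) \<partial>PX)
      + (\<Sum>t\<le>tmax. \<integral>x. bvec PX L t x * bvec PX L t x \<partial>PX)"
      unfolding trace_Sigma_eff_def Sigma_eff_def vdiag_def by (simp add: sum.distrib)
  qed
  have opt: "trace_Sigma_eff tmax PX L ps \<le> trace_Sigma_eff tmax PX L \<pi>"
    if "\<pi> \<in> Pi_alpha PX \<alpha>" for \<pi>
  proof -
    have pb: "\<And>x. x \<in> space PX \<Longrightarrow> \<alpha> \<le> \<pi> x \<and> \<pi> x \<le> 1 - \<alpha>"
      using that unfolding Pi_alpha_def by auto
    have "(\<integral>x. Vtr tmax L 1 x / ps x + Vtr tmax L 0 x / (1 - ps x) \<partial>PX)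
        \<le> (\<integral>x. Vtr tmax L 1 x / \<pi> x + Vtr tmax L 0 x / (1 - \<pi> x) \<partial>PX)"
    proof (rule integral_mono[OF intp[OF ps_in] intp[OF that]])
      fix x assume x: "x \<in> space PX"
      define a where "a = sqrt (Vtr tmax L 1 x)"
      define b where "b = sqrt (Vtr tmax L 0 x)"
      have a2: "a^2 = Vtr tmax L 1 x" unfolding a_def using Vtr_nonneg[of tmax L 1 x] by simp
      have b2: "b^2 = Vtr tmax L 0 x" unfolding b_def using Vtr_nonneg[of tmax L 0 x] by simp
      have a0: "0 \<le> a" and b0: "0 \<le> b" unfolding a_def b_def using Vtr_nonneg[of tmax L 1 x] Vtr_nonneg[of tmax L 0 x] by auto
      have "0 < a + b"
      proof (rule ccontr)
        assume "\<not> 0 < a + b"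
        hence "a = 0" "b = 0" using a0 b0 by auto
        thus False using a2 b2 assms(4) x by auto
      qed
      have "a^2 / clip \<alpha> (a/(a+b)) + b^2 / (1 - clip \<alpha> (a/(a+b))) \<le> a^2 / \<pi> x + b^2 / (1 - \<pi> x)"
        using key[OF a0 b0 \<open>0 < a + b\<close> assms(2,3)] pb[OF x] by auto
      thus "Vtr tmax L 1 x / ps x + Vtr tmax L 0 x / (1 - ps x)
         \<le> Vtr tmax L 1 x / \<pi> x + Vtr tmax L 0 x / (1 - \<pi> x)"
        unfolding ps_def a2[symmetric] b2[symmetric] using a0 b0 by simp
    qed
    thus ?thesis using tr[OF ps_in] tr[OF that] by linarith
  qed
  show ?thesis using ps_in opt unfolding ps_def by blast
qed

end
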